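(* Let $G$ be a group, let $N$ be a normal subgroup of $G$, and let $S=\bigoplus_{g\in G}S_g$ be an epsilon-strongly $G$-graded ring, with $\epsilon_g$ the multiplicative identity element of $S_gS_{g^{-1}}$. Consider the induced $G/N$-grading $\{S_C\}_{C\in G/N}$ of $S$. Then: (a) For each $C\in G/N$, the set $E_C=\bigvee\{\epsilon_g\mid g\in C\}$ is a set of local units for the ring $S_CS_{C^{-1}}$. In particular, the induced $G/N$-grading is essentially epsilon-strong. (b) If for each $C\in G/N$ (i) the poset $(E_C,\le)$ contains no infinite chain and (ii) the maximal elements of $(E_C,\le)$ are pairwise orthogonal, then the induced $G/N$-grading is virtually epsilon-strong.
   Context: Rings are associative, not necessarily unital; $AB$ denotes finite sums of products. A $G$-grading of $S$: $S=\bigoplus_{g\in G}S_g$, $S_gS_h\subseteq S_{gh}$. Symmetric: $S_gS_{g^{-1}}S_g=S_g$ for all $g$. Epsilon-strong: symmetric and each $S_gS_{g^{-1}}$ is unital (identity $\epsilon_g$; these are central idempotents of $S_e$). Induced $G/N$-grading: $S_C=\bigoplus_{g\in C}S_g$. For a ring $R$, $E(R)$ is its set of idempotents with order $a\le b$ iff $a=ab=ba$, $a\vee b$ the least upper bound (for commuting $a,b$, $a\vee b=a+b-ab$), and $\bigvee F$ the set of finite joins of elements of $F$. A set of local units for $R$ is a $\vee$-closed subset $E\subseteq E(R)$ of pairwise commuting idempotents such that for each $r\in R$ there is $f\in E$ with $fr=rf=r$. $R$ has enough idempotents if there is a set $M$ of pairwise orthogonal, commuting idempotents of $R$ such that $\bigvee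 M$ is a set of local units for $R$. A symmetric grading $\{T_h\}_{h\in H}$ is essentially (resp. virtually) epsilon-strong if every ring $T_hT_{h^{-1}}$ has a set of local units (resp. has enough idempotents). *)

theory Defs
  imports "HOL-Algebra.Coset"
begin

text \<open>The ring S is the ambient type 'a of class ring (associative, not
necessarily unital). Subsets of 'a play the role of additive subgroups/subrings.\<close>

definition fin_sums :: "'a::ring set \<Rightarrow> 'a set" where
  "fin_sums X = {sum_list xs | xs. set xs \<subseteq> X}"

definition setmul :: "'a::ring set \<Rightarrow> 'a set \<Rightarrow> 'a set" where
  "setmul A B = fin_sums {a * b | a b. a \<in> A \<and> b \<in> B}"

definition add_subgroup :: "'a::ring set \<Rightarrow> bool" where
  "add_subgroup A \<longleftrightarrow> 0 \<in> A \<and> (\<forall>x\<in>A. \<forall>y\<in>A. x - y \<in> A)"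

definition graded :: "('h, 'm) monoid_scheme \<Rightarrow> ('h \<Rightarrow> 'a::ring set) \<Rightarrow> bool" where
  "graded H T \<longleftrightarrow>
     (\<forall>h\<in>carrier H. add_subgroup (T h)) \<and>
     (\<forall>g\<in>carrier H. \<forall>h\<in>carrier H. setmul (T g) (T h) \<subseteq> T (g \<otimes>\<^bsub>H\<^esub> h)) \<and>
     (\<forall>s::'a. \<exists>!f. (\<forall>h\<in>carrier H. f h \<in> T h) \<and> (\<forall>h. h \<notin> carrier H \<longrightarrow> f h = 0)
                   \<and> finite {h. f h \<noteq> 0} \<and> s = sum f {h. f h \<noteq> 0})"

definition symmetric_grading :: "('h, 'm) monoid_scheme \<Rightarrow> ('h \<Rightarrow> 'a::ring set) \<Rightarrow> bool" where
  "symmetric_grading H T \<longleftrightarrow> graded H T \<and>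
     (\<forall>h\<in>carrier H. setmul (setmul (T h) (T (inv\<^bsub>H\<^esub> h))) (T h) = T h)"

definition is_identity_of :: "'a::ring \<Rightarrow> 'a set \<Rightarrow> bool" where
  "is_identity_of e R \<longleftrightarrow> e \<in> R \<and> (\<forall>x\<in>R. e * x = x \<and> x * e = x)"

definition unital_set :: "'a::ring set \<Rightarrow> bool" where
  "unital_set R \<longleftrightarrow> (\<exists>e. is_identity_of e R)"

definition identity_of :: "'a::ring set \<Rightarrow> 'a" where
  "identity_of R = (THE e. is_identity_of e R)"

definition epsilon_strong :: "('h, 'm) monoid_scheme \<Rightarrow> ('h \<Rightarrow> 'a::ring set) \<Rightarrow> bool" where
  "epsilon_strong H T \<longleftrightarrow> symmetric_grading H T \<and>
     (\<forall>h\<in>carrier H. unital_set (setmul (T h) (T (inv\<^bsub>H\<^esub> h))))"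

definition eps :: "('h, 'm) monoid_scheme \<Rightarrow> ('h \<Rightarrow> 'a::ring set) \<Rightarrow> 'h \<Rightarrow> 'a" where
  "eps H T h = identity_of (setmul (T h) (T (inv\<^bsub>H\<^esub> h)))"

definition idempotents :: "'a::ring set \<Rightarrow> 'a set" where
  "idempotents R = {e \<in> R. e * e = e}"

definition idem_le :: "'a::ring \<Rightarrow> 'a \<Rightarrow> bool" where
  "idem_le a b \<longleftrightarrow> a = a * b \<and> a = b * a"

definition idem_join :: "'a::ring \<Rightarrow> 'a \<Rightarrow> 'a" where
  "idem_join a b = a + b - a * b"

inductive_set joins :: "'a::ring set \<Rightarrow> 'a set" for F where
  base: "x \<in> F \<Longrightarrow> x \<in> joins F"
| join: "x \<in> joins F \<Longrightarrow> y \<in> joins F \<Longrightarrow> idem_join x y \<in> joins F"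

definition local_units :: "'a::ring set \<Rightarrow> 'a set \<Rightarrow> bool" where
  "local_units R E \<longleftrightarrow> E \<subseteq> idempotents R \<and>
     (\<forall>a\<in>E. \<forall>b\<in>E. a * b = b * a) \<and>
     (\<forall>a\<in>E. \<forall>b\<in>E. idem_join a b \<in> E) \<and>
     (\<forall>r\<in>R. \<exists>f\<in>E. f * r = r \<and> r * f = r)"

definition has_local_units :: "'a::ring set \<Rightarrow> bool" where
  "has_local_units R \<longleftrightarrow> (\<exists>E. local_units R E)"

definition enough_idempotents :: "'a::ring set \<Rightarrow> bool" where
  "enough_idempotents R \<longleftrightarrow> (\<exists>M. M \<subseteq> idempotents R \<and>
     (\<forall>a\<in>M. \<forall>b\<in>M. a * b = b * a) \<and>
     (\<forall>a\<in>M. \<forall>b\<in>M. a \<noteq> b \<longrightarrow> a * b = 0) \<and>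
     local_units R (joins M))"

definition essentially_epsilon_strong :: "('h, 'm) monoid_scheme \<Rightarrow> ('h \<Rightarrow> 'a::ring set) \<Rightarrow> bool" where
  "essentially_epsilon_strong H T \<longleftrightarrow> symmetric_grading H T \<and>
     (\<forall>h\<in>carrier H. has_local_units (setmul (T h) (T (inv\<^bsub>H\<^esub> h))))"

definition virtually_epsilon_strong :: "('h, 'm) monoid_scheme \<Rightarrow> ('h \<Rightarrow> 'a::ring set) \<Rightarrow> bool" where
  "virtually_epsilon_strong H T \<longleftrightarrow> symmetric_grading H T \<and>
     (\<forall>h\<in>carrier H. enough_idempotents (setmul (T h) (T (inv\<^bsub>H\<^esub> h))))"

definition induced_grading :: "('g \<Rightarrow> 'a::ring set) \<Rightarrow> 'g set \<Rightarrow> 'a set" where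
  "induced_grading S C = fin_sums (\<Union>g\<in>C. S g)"

definition no_infinite_chain :: "'a::ring set \<Rightarrow> bool" where
  "no_infinite_chain E \<longleftrightarrow>
     \<not> (\<exists>X\<subseteq>E. infinite X \<and> (\<forall>a\<in>X. \<forall>b\<in>X. idem_le a b \<or> idem_le b a))"

definition maximal_elements :: "'a::ring set \<Rightarrow> 'a set" where
  "maximal_elements E = {e \<in> E. \<forall>f\<in>E. idem_le e f \<longrightarrow> f = e}"

definition pairwise_orthogonal :: "'a::ring set \<Rightarrow> bool" where
  "pairwise_orthogonal M \<longleftrightarrow> (\<forall>a\<in>M. \<forall>b\<in>M. a \<noteq> b \<longrightarrow> a * b = 0 \<and> b * a = 0)"

end

theory Submission
  imports Defs
begin

lemma fs_zero[simp]: "0 \<in> fin_sums X"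
  unfolding fin_sums_def by (rule CollectI, rule exI[of _ "[]"]) simp

lemma fs_base: "x \<in> X \<Longrightarrow> x \<in> fin_sums X"
  unfolding fin_sums_def by (rule CollectI, rule exI[of _ "[x]"]) simp

lemma fs_add: "a \<in> fin_sums X \<Longrightarrow> b \<in> fin_sums X \<Longrightarrow> a + b \<in> fin_sums X"
  unfolding fin_sums_def
proof -
  assume "a \<in> {sum_list xs |xs. set xs \<subseteq> X}" "b \<in> {sum_list xs |xs. set xs \<subseteq> X}"
  then obtain xs ys where "a = sum_list xs" "set xs \<subseteq> X" "b = sum_list ys" "set ys \<subseteq> X" by blast
  then show "a + b \<in> {sum_list xs |xs. set xs \<subseteq> X}"
    by (intro CollectI exI[of _ "xs @ ys"]) auto
qed

lemma fs_induct[consumes 1, case_names zero base add]: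
  assumes "y \<in> fin_sums X" "P 0" "\<And>x. x \<in> X \<Longrightarrow> P x"
    "\<And>a b. a \<in> fin_sums X \<Longrightarrow> b \<in> fin_sums X \<Longrightarrow> P a \<Longrightarrow> P b \<Longrightarrow> P (a + b)"
  shows "P y"
proof -
  obtain xs where xs: "y = sum_list xs" "set xs \<subseteq> X" using assms(1) unfolding fin_sums_def by blast
  have "sum_list xs \<in> fin_sums X \<and> P (sum_list xs)" using xs(2)
  proof (induction xs)
    case Nil then show ?case using assms(2) by simp
  next
    case (Cons x xs)
    then have x: "x \<in> X" and r: "sum_list xs \<in> fin_sums X" "P (sum_list xs)" by auto
    have "x \<in> fin_sums X" using x by (rule fs_base)
    then show ?case using r assms(3)[OF x] assms(4)[of x "sum_list xs"] fs_add[of x X "sum_list xs"] by auto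
  qed
  then show ?thesis using xs by simp
qed

lemma fs_subset: "X \<subseteq> fin_sums Y \<Longrightarrow> fin_sums X \<subseteq> fin_sums Y"
  by (auto elim: fs_induct intro: fs_add)

lemma fs_mono: "X \<subseteq> Y \<Longrightarrow> fin_sums X \<subseteq> fin_sums Y"
  by (rule fs_subset) (auto intro: fs_base)

lemma fs_sum: "finite A \<Longrightarrow> (\<And>i. i \<in> A \<Longrightarrow> f i \<in> fin_sums X) \<Longrightarrow> sum f A \<in> fin_sums X"
  by (induction A rule: finite_induct) (auto intro: fs_add)

lemma fs_hom:
  assumes "y \<in> fin_sums X" "\<And>a b. h (a + b) = h a + h b" "h 0 = 0" "\<And>x. x \<in> X \<Longrightarrow> h x \<in> fin_sums Y"
  shows "h y \<in> fin_sums Y"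
  using assms(1) by (induction rule: fs_induct) (auto simp: assms intro: fs_add)

lemma fs_uminus: "(\<And>x. x \<in> X \<Longrightarrow> - x \<in> X) \<Longrightarrow> y \<in> fin_sums X \<Longrightarrow> - y \<in> fin_sums X"
  by (rule fs_hom[where h=uminus]) (auto intro: fs_base)

lemma fs_diff: "(\<And>x. x \<in> X \<Longrightarrow> - x \<in> X) \<Longrightarrow> a \<in> fin_sums X \<Longrightarrow> b \<in> fin_sums X \<Longrightarrow> a - b \<in> fin_sums X"
  using fs_add[of a X "- b"] fs_uminus[of X b] by simp

lemma setmul_prod: "a \<in> A \<Longrightarrow> b \<in> B \<Longrightarrow> a * b \<in> setmul A B"
  unfolding setmul_def by (rule fs_base) blast

lemma setmul_add: "a \<in> setmul A B \<Longrightarrow> b \<in> setmul A B \<Longrightarrow> a + b \<in> setmul A B"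
  unfolding setmul_def by (rule fs_add)

lemma setmul_zero[simp]: "0 \<in> setmul A B"
  unfolding setmul_def by simp

lemma setmul_induct[consumes 1, case_names zero prod add]:
  assumes "y \<in> setmul A B" "P 0" "\<And>a b. a \<in> A \<Longrightarrow> b \<in> B \<Longrightarrow> P (a * b)"
    "\<And>a b. a \<in> setmul A B \<Longrightarrow> b \<in> setmul A B \<Longrightarrow> P a \<Longrightarrow> P b \<Longrightarrow> P (a + b)"
  shows "P y"
  using assms(1) unfolding setmul_def
  by (induction rule: fs_induct) (use assms(2-4) in \<open>auto simp: setmul_def\<close>)

lemma setmul_mono: "A \<subseteq> A' \<Longrightarrow> B \<subseteq> B' \<Longrightarrow> setmul A B \<subseteq> setmul A' B'"
  unfolding setmul_def by (rule fs_mono) blast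

lemma setmul_fs:
  assumes "a \<in> fin_sums A" "b \<in> fin_sums B" shows "a * b \<in> setmul A B"
  using assms(1)
proof (induction rule: fs_induct)
  case zero then show ?case by simp
next
  case (base x)
  show ?case using assms(2)
    by (induction rule: fs_induct) (auto simp: distrib_left intro: setmul_add setmul_prod base)
next
  case (add a c) then show ?case by (auto simp: distrib_right intro: setmul_add)
qed

lemma setmul_closed_fs: "fin_sums (setmul A B) = setmul A B"
proof
  show "fin_sums (setmul A B) \<subseteq> setmul A B"
    unfolding setmul_def by (rule fs_subset) simp
qed (auto intro: fs_base)

lemma setmul_sub_fs: assumes "setmul A B \<subseteq> C" "fin_sums C = C" shows "setmul (fin_sums A) (fin_sums B) \<subseteq> C"
proof -
  have "{a * b |a b. a \<in> fin_sums A \<and> b \<in> fin_sums B} \<subseteq> fin_sums C"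
    using setmul_fs[of _ A _ B] assms(1) by (auto intro!: fs_base)
  then have "fin_sums {a * b |a b. a \<in> fin_sums A \<and> b \<in> fin_sums B} \<subseteq> fin_sums C"
    by (rule fs_subset)
  then show ?thesis unfolding setmul_def[of "fin_sums A"] using \<open>fin_sums C = C\<close> by simp
qed

lemma setmul_fs_eq: "setmul (fin_sums A) (fin_sums B) = setmul A B"
proof
  show "setmul (fin_sums A) (fin_sums B) \<subseteq> setmul A B"
    by (rule setmul_sub_fs) (auto simp: setmul_closed_fs)
  show "setmul A B \<subseteq> setmul (fin_sums A) (fin_sums B)"
    by (rule setmul_mono) (auto intro: fs_base)
qed

lemma setmul_assoc: "setmul (setmul A B) C = setmul A (setmul B C)"
proof
  show "setmul (setmul A B) C \<subseteq> setmul A (setmul B C)"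
  proof
    fix y assume "y \<in> setmul (setmul A B) C"
    then show "y \<in> setmul A (setmul B C)"
    proof (induction rule: setmul_induct)
      case (prod x c)
      note c = prod(2)
      from prod(1) show ?case
      proof (induction rule: setmul_induct)
        case (prod a b) then show ?case using c
          by (simp add: mult.assoc setmul_prod)
      qed (auto simp: distrib_right intro: setmul_add)
    qed (auto intro: setmul_add)
  qed
  show "setmul A (setmul B C) \<subseteq> setmul (setmul A B) C"
  proof
    fix y assume "y \<in> setmul A (setmul B C)"
    then show "y \<in> setmul (setmul A B) C"
    proof (induction rule: setmul_induct)
      case (prod a x)
      note a = prod(1)
      from prod(2) show ?case
      proof (induction rule: setmul_induct)
        case (prod b c) then show ?case using a
          by (simp add: mult.assoc[symmetric] setmul_prod)
      qed (auto simp: distrib_left intro: setmul_add)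
    qed (auto intro: setmul_add)
  qed
qed


definition dec :: "('h, 'm) monoid_scheme \<Rightarrow> ('h \<Rightarrow> 'a::ring set) \<Rightarrow> 'a \<Rightarrow> ('h \<Rightarrow> 'a) \<Rightarrow> bool" where
  "dec H T s f \<longleftrightarrow> (\<forall>h\<in>carrier H. f h \<in> T h) \<and> (\<forall>h. h \<notin> carrier H \<longrightarrow> f h = 0)
                   \<and> finite {h. f h \<noteq> 0} \<and> s = sum f {h. f h \<noteq> 0}"

lemma graded_alt: "graded H T \<longleftrightarrow>
     (\<forall>h\<in>carrier H. add_subgroup (T h)) \<and>
     (\<forall>g\<in>carrier H. \<forall>h\<in>carrier H. setmul (T g) (T h) \<subseteq> T (g \<otimes>\<^bsub>H\<^esub> h)) \<and>
     (\<forall>s. \<exists>!f. dec H T s f)"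
  unfolding graded_def dec_def by simp

locale es = group G for G :: "('g, 'm) monoid_scheme" (structure) +
  fixes S :: "'g \<Rightarrow> 'r::ring set"
  assumes eps_str: "epsilon_strong G S"
begin

lemma gr: "graded G S" and symm: "\<And>h. h \<in> carrier G \<Longrightarrow> setmul (setmul (S h) (S (inv h))) (S h) = S h"
  and unit: "\<And>h. h \<in> carrier G \<Longrightarrow> unital_set (setmul (S h) (S (inv h)))"
  using eps_str unfolding epsilon_strong_def symmetric_grading_def by auto

lemma S_zero: "g \<in> carrier G \<Longrightarrow> 0 \<in> S g"
  using gr unfolding graded_def add_subgroup_def by auto

lemma S_diff: "g \<in> carrier G \<Longrightarrow> x \<in> S g \<Longrightarrow> y \<in> S g \<Longrightarrow> x - y \<in> S g"
  using gr unfolding graded_def add_subgroup_def by auto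

lemma S_uminus: "g \<in> carrier G \<Longrightarrow> x \<in> S g \<Longrightarrow> - x \<in> S g"
  using S_diff[of g 0 x] S_zero by simp

lemma S_add: "g \<in> carrier G \<Longrightarrow> x \<in> S g \<Longrightarrow> y \<in> S g \<Longrightarrow> x + y \<in> S g"
  using S_diff[of g x "- y"] S_uminus by simp

lemma S_fs: "g \<in> carrier G \<Longrightarrow> fin_sums (S g) = S g"
proof
  assume g: "g \<in> carrier G"
  show "fin_sums (S g) \<subseteq> S g"
  proof
    fix y assume "y \<in> fin_sums (S g)" then show "y \<in> S g"
      by (induction rule: fs_induct) (auto simp: g S_zero S_add)
  qed
qed (auto intro: fs_base)

lemma S_sum: "g \<in> carrier G \<Longrightarrow> finite A \<Longrightarrow> (\<And>i. i \<in> A \<Longrightarrow> f i \<in> S g) \<Longrightarrow> sum f A \<in> S g"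
  using fs_sum[of A f "S g"] S_fs[of g] by (auto intro: fs_base)

lemma S_setmul: "g \<in> carrier G \<Longrightarrow> h \<in> carrier G \<Longrightarrow> setmul (S g) (S h) \<subseteq> S (g \<otimes> h)"
  using gr unfolding graded_def by auto

lemma S_mult: "g \<in> carrier G \<Longrightarrow> h \<in> carrier G \<Longrightarrow> x \<in> S g \<Longrightarrow> y \<in> S h \<Longrightarrow> x * y \<in> S (g \<otimes> h)"
  using S_setmul setmul_prod by blast

lemma ex1_dec: "\<exists>!f. dec G S s f"
  using gr unfolding graded_alt by auto

definition proj :: "'r \<Rightarrow> 'g \<Rightarrow> 'r" where
  "proj s = (THE f. dec G S s f)"

lemma proj_dec: "dec G S s (proj s)"
  unfolding proj_def using theI'[OF ex1_dec] .

lemma proj_unique: "dec G S s f \<Longrightarrow> proj s = f"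
  unfolding proj_def by (rule the1_equality[OF ex1_dec])

lemma proj_in: "h \<in> carrier G \<Longrightarrow> proj s h \<in> S h"
  and proj_out: "h \<notin> carrier G \<Longrightarrow> proj s h = 0"
  and proj_fin: "finite {h. proj s h \<noteq> 0}"
  and proj_sum0: "sum (proj s) {h. proj s h \<noteq> 0} = s"
  using proj_dec[of s] unfolding dec_def by (blast, blast, blast, metis)

lemma proj_sum: "finite A \<Longrightarrow> {h. proj s h \<noteq> 0} \<subseteq> A \<Longrightarrow> sum (proj s) A = s"
proof -
  assume A: "finite A" "{h. proj s h \<noteq> 0} \<subseteq> A"
  have "sum (proj s) A = sum (proj s) {h. proj s h \<noteq> 0}"
    by (rule sum.mono_neutral_right[OF A]) auto
  then show ?thesis using proj_sum0[of s] by simp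
qed

lemma proj_eqI:
  assumes "\<And>h. h \<in> carrier G \<Longrightarrow> f h \<in> S h" "\<And>h. h \<notin> carrier G \<Longrightarrow> f h = 0"
    "finite A" "{h. f h \<noteq> 0} \<subseteq> A" "s = sum f A"
  shows "proj s = f"
proof (rule proj_unique)
  have fin: "finite {h. f h \<noteq> 0}" using assms(3,4) finite_subset by blast
  have "sum f A = sum f {h. f h \<noteq> 0}"
    by (rule sum.mono_neutral_right[OF assms(3,4)]) auto
  then have "s = sum f {h. f h \<noteq> 0}" using assms(5) by simp
  then show "dec G S s f" unfolding dec_def using assms(1,2) fin by blast
qed

lemma proj_add: "proj (x + y) = (\<lambda>h. proj x h + proj y h)"
proof (rule proj_eqI[where A = "{h. proj x h \<noteq> 0} \<union> {h. proj y h \<noteq> 0}"])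
  show "x + y = (\<Sum>h\<in>{h. proj x h \<noteq> 0} \<union> {h. proj y h \<noteq> 0}. proj x h + proj y h)"
  proof -
    let ?A = "{h. proj x h \<noteq> 0} \<union> {h. proj y h \<noteq> 0}"
    have f: "finite ?A" using proj_fin by blast
    have "sum (proj x) ?A = x" "sum (proj y) ?A = y" using proj_sum[OF f] by blast+
    then show ?thesis by (simp add: sum.distrib)
  qed
qed (auto simp: proj_in proj_out S_add proj_fin)

lemma proj_zero: "proj 0 = (\<lambda>h. 0)"
  by (rule proj_eqI[where A = "{}"]) (auto simp: S_zero)

lemma proj_setsum: "finite I \<Longrightarrow> proj (sum F I) = (\<lambda>h. sum (\<lambda>i. proj (F i) h) I)"
  by (induction I rule: finite_induct) (auto simp: proj_zero proj_add)

lemma proj_single: "g \<in> carrier G \<Longrightarrow> x \<in> S g \<Longrightarrow> proj x = (\<lambda>h. if h = g then x else 0)"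
  by (rule proj_eqI[where A = "{g}"]) (auto simp: S_zero)

lemma eps_ident: "g \<in> carrier G \<Longrightarrow> is_identity_of (eps G S g) (setmul (S g) (S (inv g)))"
proof -
  assume g: "g \<in> carrier G"
  obtain e where e: "is_identity_of e (setmul (S g) (S (inv g)))"
    using unit[OF g] unfolding unital_set_def by blast
  have "e' = e" if e': "is_identity_of e' (setmul (S g) (S (inv g)))" for e'
  proof -
    have "e' * e = e" using e' e unfolding is_identity_of_def by blast
    moreover have "e' * e = e'" using e' e unfolding is_identity_of_def by blast
    ultimately show ?thesis by simp
  qed
  then have "(THE e. is_identity_of e (setmul (S g) (S (inv g)))) = e"
    using e by (rule the_equality[rotated])
  then show ?thesis using e unfolding eps_def identity_of_def by simp
qed

lemma eps_mem: "g \<in> carrier G \<Longrightarrow> eps G S g \<in> setmul (S g) (S (inv g))"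
  using eps_ident[of g] unfolding is_identity_of_def by simp

lemma eps_idl: "g \<in> carrier G \<Longrightarrow> y \<in> setmul (S g) (S (inv g)) \<Longrightarrow> eps G S g * y = y"
  and eps_idr: "g \<in> carrier G \<Longrightarrow> y \<in> setmul (S g) (S (inv g)) \<Longrightarrow> y * eps G S g = y"
  using eps_ident[of g] unfolding is_identity_of_def by simp_all

lemma eps_idem: "g \<in> carrier G \<Longrightarrow> eps G S g * eps G S g = eps G S g"
  using eps_idl eps_mem by blast

lemma eps_left: "g \<in> carrier G \<Longrightarrow> x \<in> S g \<Longrightarrow> eps G S g * x = x"
proof -
  assume g: "g \<in> carrier G" and x: "x \<in> S g"
  then have "x \<in> setmul (setmul (S g) (S (inv g))) (S g)" using symm by simp
  then show ?thesis
  proof (induction rule: setmul_induct)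
    case (prod a b) then show ?case using eps_idl[OF g] by (simp add: mult.assoc[symmetric])
  qed (auto simp: distrib_left)
qed

lemma eps_right: "g \<in> carrier G \<Longrightarrow> x \<in> S g \<Longrightarrow> x * eps G S (inv g) = x"
proof -
  assume g: "g \<in> carrier G" and x: "x \<in> S g"
  then have "x \<in> setmul (S g) (setmul (S (inv g)) (S (inv (inv g))))"
    using symm[OF g] by (simp add: setmul_assoc)
  then show ?thesis
  proof (induction rule: setmul_induct)
    case (prod a b) then show ?case using eps_idr[of "inv g"] g by (simp add: mult.assoc)
  qed (auto simp: distrib_right)
qed

lemma SS_Se: "g \<in> carrier G \<Longrightarrow> setmul (S g) (S (inv g)) \<subseteq> S \<one>"
  using S_setmul[of g "inv g"] by simp

lemma eps_Se: "g \<in> carrier G \<Longrightarrow> eps G S g \<in> S \<one>"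
  using SS_Se eps_mem by blast

lemma ideal_l: "g \<in> carrier G \<Longrightarrow> x \<in> S \<one> \<Longrightarrow> y \<in> setmul (S g) (S (inv g)) \<Longrightarrow> x * y \<in> setmul (S g) (S (inv g))"
proof -
  assume g: "g \<in> carrier G" and x: "x \<in> S \<one>" and y: "y \<in> setmul (S g) (S (inv g))"
  from y show ?thesis
  proof (induction rule: setmul_induct)
    case (prod a b)
    have "x * a \<in> S g" using S_mult[of \<one> g x a] g x prod by simp
    then show ?case using prod by (simp add: mult.assoc[symmetric] setmul_prod)
  qed (auto simp: distrib_left intro: setmul_add)
qed

lemma ideal_r: "g \<in> carrier G \<Longrightarrow> x \<in> S \<one> \<Longrightarrow> y \<in> setmul (S g) (S (inv g)) \<Longrightarrow> y * x \<in> setmul (S g) (S (inv g))"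
proof -
  assume g: "g \<in> carrier G" and x: "x \<in> S \<one>" and y: "y \<in> setmul (S g) (S (inv g))"
  from y show ?thesis
  proof (induction rule: setmul_induct)
    case (prod a b)
    have "b * x \<in> S (inv g)" using S_mult[of "inv g" \<one> b x] g x prod by simp
    then show ?case using prod by (simp add: mult.assoc setmul_prod)
  qed (auto simp: distrib_right intro: setmul_add)
qed

lemma eps_central: "g \<in> carrier G \<Longrightarrow> x \<in> S \<one> \<Longrightarrow> eps G S g * x = x * eps G S g"
proof -
  assume g: "g \<in> carrier G" and x: "x \<in> S \<one>"
  have "eps G S g * x = eps G S g * x * eps G S g"
    using eps_idr[OF g ideal_r[OF g x eps_mem[OF g]]] by simp
  also have "\<dots> = x * eps G S g"
    using eps_idl[OF g ideal_l[OF g x eps_mem[OF g]]] by (simp add: mult.assoc)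
  finally show ?thesis .
qed

end

locale esn = es G S for G :: "('g, 'm) monoid_scheme" (structure) and S :: "'g \<Rightarrow> 'r::ring set" +
  fixes N :: "'g set"
  assumes nrm: "N \<lhd> G"
begin

sublocale normal N G by (rule nrm)

abbreviation Q where "Q \<equiv> G Mod N"
abbreviation T where "T \<equiv> induced_grading S"

lemma Qgrp: "group Q" by (rule factorgroup_is_group)

lemma carrQ: "carrier Q = rcosets N" by (simp add: FactGroup_def)

lemma cos_sub: "C \<in> carrier Q \<Longrightarrow> C \<subseteq> carrier G"
  using carrQ rcosets_carrier is_group by auto

lemma cos_of: "g \<in> carrier G \<Longrightarrow> N #> g \<in> carrier Q \<and> g \<in> N #> g"
  using carrQ rcosetsI[OF subset] rcos_self[OF _ subgroup_axioms] by auto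

lemma cos_disj: "C \<in> carrier Q \<Longrightarrow> D \<in> carrier Q \<Longrightarrow> g \<in> C \<Longrightarrow> g \<in> D \<Longrightarrow> C = D"
  using rcos_disjoint[OF subgroup_axioms] carrQ unfolding pairwise_def disjnt_def by blast

lemma cos_eq: "C \<in> carrier Q \<Longrightarrow> g \<in> C \<Longrightarrow> C = N #> g"
  using cos_disj cos_of cos_sub by blast

lemma cos_ne: "C \<in> carrier Q \<Longrightarrow> \<exists>g. g \<in> C"
  using carrQ cos_of unfolding RCOSETS_def by blast

lemma invQ: "C \<in> carrier Q \<Longrightarrow> inv\<^bsub>Q\<^esub> C = set_inv C"
  by (rule inv_FactGroup)

lemma inv_mem: "C \<in> carrier Q \<Longrightarrow> g \<in> C \<Longrightarrow> inv g \<in> inv\<^bsub>Q\<^esub> C"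
  using invQ unfolding SET_INV_def by auto

lemma inv_mem2: "C \<in> carrier Q \<Longrightarrow> h \<in> inv\<^bsub>Q\<^esub> C \<Longrightarrow> inv h \<in> C"
proof -
  assume C: "C \<in> carrier Q" and h: "h \<in> inv\<^bsub>Q\<^esub> C"
  then obtain x where x: "x \<in> C" "h = inv x" using invQ[OF C] unfolding SET_INV_def by auto
  then have "x \<in> carrier G" using cos_sub[OF C] by blast
  then show ?thesis using x by simp
qed

lemma mulQ_mem: "g \<in> C \<Longrightarrow> h \<in> D \<Longrightarrow> g \<otimes> h \<in> C \<otimes>\<^bsub>Q\<^esub> D"
  unfolding mult_FactGroup set_mult_def by auto

lemma S_T: "g \<in> C \<Longrightarrow> S g \<subseteq> T C"
  unfolding induced_grading_def by (auto intro: fs_base)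

lemma T_fs: "fin_sums (T C) = T C"
  unfolding induced_grading_def
  by (rule equalityI, rule fs_subset, simp, auto intro: fs_base)

lemma T_uminus: "C \<in> carrier Q \<Longrightarrow> x \<in> T C \<Longrightarrow> - x \<in> T C"
  unfolding induced_grading_def
  by (rule fs_uminus) (use cos_sub S_uminus in blast)+

lemma T_add: "x \<in> T C \<Longrightarrow> y \<in> T C \<Longrightarrow> x + y \<in> T C"
  unfolding induced_grading_def by (rule fs_add)

lemma T_zero: "0 \<in> T C"
  unfolding induced_grading_def by simp

lemma T_setmul: "C \<in> carrier Q \<Longrightarrow> D \<in> carrier Q \<Longrightarrow> setmul (T C) (T D) \<subseteq> T (C \<otimes>\<^bsub>Q\<^esub> D)"
  unfolding induced_grading_def[of S C] induced_grading_def[of S D]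
proof (rule setmul_sub_fs[OF _ T_fs])
  assume C: "C \<in> carrier Q" and D: "D \<in> carrier Q"
  show "setmul (\<Union> (S ` C)) (\<Union> (S ` D)) \<subseteq> T (C \<otimes>\<^bsub>Q\<^esub> D)"
    unfolding setmul_def[of "\<Union> (S ` C)"]
  proof (rule order.trans[OF fs_mono T_fs[THEN equalityD1]])
    show "{a * b |a b. a \<in> \<Union> (S ` C) \<and> b \<in> \<Union> (S ` D)} \<subseteq> T (C \<otimes>\<^bsub>Q\<^esub> D)"
    proof clarify
      fix a b g h assume "g \<in> C" "a \<in> S g" "h \<in> D" "b \<in> S h"
      then show "a * b \<in> T (C \<otimes>\<^bsub>Q\<^esub> D)"
        using S_mult[of g h a b] cos_sub[OF C] cos_sub[OF D] S_T[OF mulQ_mem, of g C h D] by blast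
    qed
  qed
qed

lemma proj_T: "C \<in> carrier Q \<Longrightarrow> x \<in> T C \<Longrightarrow> h \<notin> C \<Longrightarrow> proj x h = 0"
proof -
  assume C: "C \<in> carrier Q" and x: "x \<in> T C" and h: "h \<notin> C"
  from x show ?thesis unfolding induced_grading_def
  proof (induction rule: fs_induct)
    case zero then show ?case by (simp add: proj_zero)
  next
    case (base y) then obtain g where "g \<in> C" "y \<in> S g" by blast
    then show ?case using proj_single[of g y] h cos_sub[OF C] by auto
  next
    case (add a b) then show ?case by (simp add: proj_add)
  qed
qed

definition Fq :: "'r \<Rightarrow> 'g set \<Rightarrow> 'r" where
  "Fq s C = (if C \<in> carrier Q then sum (proj s) ({h. proj s h \<noteq> 0} \<inter> C) else 0)"

lemma Fq_dec: "dec Q T s (Fq s)"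
proof -
  let ?A = "{h. proj s h \<noteq> 0}"
  have finA: "finite ?A" by (rule proj_fin)
  have Acar: "?A \<subseteq> carrier G" using proj_out by blast
  have inT: "\<forall>C\<in>carrier Q. Fq s C \<in> T C"
  proof
    fix C assume C: "C \<in> carrier Q"
    have "sum (proj s) (?A \<inter> C) \<in> fin_sums (T C)"
    proof (rule fs_sum)
      fix i assume i: "i \<in> ?A \<inter> C"
      then have "proj s i \<in> S i" using proj_in cos_sub[OF C] by blast
      then show "proj s i \<in> fin_sums (T C)" using S_T[of i C] i by (auto intro: fs_base)
    qed (use finA in auto)
    then show "Fq s C \<in> T C" using C T_fs unfolding Fq_def by simp
  qed
  have out: "\<forall>C. C \<notin> carrier Q \<longrightarrow> Fq s C = 0" unfolding Fq_def by simp
  let ?I = "(\<lambda>g. N #> g) ` ?A"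
  have finI: "finite ?I" using finA by simp
  have supp: "{C. Fq s C \<noteq> 0} \<subseteq> ?I"
  proof
    fix C assume "C \<in> {C. Fq s C \<noteq> 0}"
    then have C: "C \<in> carrier Q" and ne: "?A \<inter> C \<noteq> {}" unfolding Fq_def by (auto split: if_splits)
    then obtain g where "g \<in> ?A" "g \<in> C" by blast
    then show "C \<in> ?I" using cos_eq[OF C] by blast
  qed
  have finS: "finite {C. Fq s C \<noteq> 0}" using finI supp finite_subset by blast
  have "sum (Fq s) {C. Fq s C \<noteq> 0} = sum (Fq s) ?I"
    by (rule sum.mono_neutral_left[OF finI supp]) auto
  also have "\<dots> = sum (\<lambda>C. sum (proj s) (?A \<inter> C)) ?I"
    by (rule sum.cong) (use cos_of Acar in \<open>auto simp: Fq_def\<close>)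
  also have "\<dots> = sum (proj s) (\<Union>C\<in>?I. ?A \<inter> C)"
  proof (rule sum.UNION_disjoint[symmetric])
    show "\<forall>i\<in>?I. \<forall>j\<in>?I. i \<noteq> j \<longrightarrow> ?A \<inter> i \<inter> (?A \<inter> j) = {}"
      using cos_disj cos_of Acar by blast
  qed (use finI finA in auto)
  also have "(\<Union>C\<in>?I. ?A \<inter> C) = ?A" using cos_of Acar by blast
  also have "sum (proj s) ?A = s" by (rule proj_sum0)
  finally show ?thesis unfolding dec_def using inT out finS by simp
qed

lemma Fq_unique:
  assumes d: "dec Q T s F"
  shows "F = Fq s"
proof (rule ext)
  fix C
  have Fin: "\<And>D. D \<in> carrier Q \<Longrightarrow> F D \<in> T D" and Fout: "\<And>D. D \<notin> carrier Q \<Longrightarrow> F D = 0"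
    and Ffin: "finite {D. F D \<noteq> 0}" and Fsum: "s = sum F {D. F D \<noteq> 0}"
    using d unfolding dec_def by auto
  show "F C = Fq s C"
  proof (cases "C \<in> carrier Q")
    case False then show ?thesis using Fout by (simp add: Fq_def)
  next
    case C: True
    let ?B = "insert C {D. F D \<noteq> 0}"
    have finB: "finite ?B" using Ffin by simp
    have "sum F {D. F D \<noteq> 0} = sum F ?B" by (rule sum.mono_neutral_left[OF finB]) auto
    then have sB: "s = sum F ?B" using Fsum by simp
    have key: "proj s h = proj (F C) h" if h: "h \<in> C" for h
    proof -
      have "proj s h = sum (\<lambda>D. proj (F D) h) ?B" using sB proj_setsum[OF finB, of F] by metis
      also have "\<dots> = proj (F C) h + sum (\<lambda>D. proj (F D) h) (?B - {C})"
        by (subst sum.remove[OF finB insertI1]) (rule refl)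
      also have "sum (\<lambda>D. proj (F D) h) (?B - {C}) = 0"
      proof (rule sum.neutral, rule ballI)
        fix D assume "D \<in> ?B - {C}"
        then have D: "F D \<noteq> 0" "D \<noteq> C" by auto
        then have Dc: "D \<in> carrier Q" using Fout by blast
        then have "h \<notin> D" using cos_disj[OF C Dc h] D by blast
        then show "proj (F D) h = 0" using proj_T[OF Dc Fin[OF Dc]] by blast
      qed
      finally show ?thesis by simp
    qed
    let ?A = "{h. proj s h \<noteq> 0}"
    let ?A' = "(?A \<union> {h. proj (F C) h \<noteq> 0}) \<inter> C"
    have finA': "finite ?A'" using proj_fin by blast
    have "sum (proj (F C)) ?A' = F C"
      by (rule proj_sum[OF finA']) (use proj_T[OF C Fin[OF C]] in blast)
    then have "F C = sum (proj (F C)) ?A'" by simp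
    also have "\<dots> = sum (proj s) ?A'" using key by (intro sum.cong) auto
    also have "\<dots> = sum (proj s) (?A \<inter> C)"
      by (rule sum.mono_neutral_right[OF finA']) auto
    finally show ?thesis using C by (simp add: Fq_def)
  qed
qed

lemma T_graded: "graded Q T"
  unfolding graded_alt
proof (intro conjI ballI allI)
  fix C assume C: "C \<in> carrier Q"
  show "add_subgroup (T C)" unfolding add_subgroup_def
    using T_zero T_add T_uminus[OF C] by (metis diff_conv_add_uminus)
next
  fix C D assume "C \<in> carrier Q" "D \<in> carrier Q"
  then show "setmul (T C) (T D) \<subseteq> T (C \<otimes>\<^bsub>Q\<^esub> D)" by (rule T_setmul)
next
  fix s show "\<exists>!f. dec Q T s f" using Fq_dec Fq_unique by blast
qed

lemma T_symm: "C \<in> carrier Q \<Longrightarrow> setmul (setmul (T C) (T (inv\<^bsub>Q\<^esub> C))) (T C) = T C"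
proof
  assume C: "C \<in> carrier Q"
  interpret Q: group Q by (rule Qgrp)
  have Ci: "inv\<^bsub>Q\<^esub> C \<in> carrier Q" using C by simp
  have "setmul (setmul (T C) (T (inv\<^bsub>Q\<^esub> C))) (T C) \<subseteq> setmul (T (C \<otimes>\<^bsub>Q\<^esub> inv\<^bsub>Q\<^esub> C)) (T C)"
    by (rule setmul_mono[OF T_setmul[OF C Ci]]) simp
  also have "\<dots> \<subseteq> T ((C \<otimes>\<^bsub>Q\<^esub> inv\<^bsub>Q\<^esub> C) \<otimes>\<^bsub>Q\<^esub> C)"
    by (rule T_setmul[OF Q.m_closed[OF C Ci] C])
  also have "(C \<otimes>\<^bsub>Q\<^esub> inv\<^bsub>Q\<^esub> C) \<otimes>\<^bsub>Q\<^esub> C = C" by (simp only: Q.r_inv[OF C] Q.l_one[OF C])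
  finally show "setmul (setmul (T C) (T (inv\<^bsub>Q\<^esub> C))) (T C) \<subseteq> T C" .
  let ?X = "setmul (setmul (T C) (T (inv\<^bsub>Q\<^esub> C))) (T C)"
  have "\<Union> (S ` C) \<subseteq> ?X"
  proof clarify
    fix g x assume g: "g \<in> C" and x: "x \<in> S g"
    have gc: "g \<in> carrier G" using g cos_sub[OF C] by blast
    have "S g = setmul (setmul (S g) (S (inv g))) (S g)" using symm[OF gc] by simp
    also have "\<dots> \<subseteq> ?X"
      by (intro setmul_mono S_T g inv_mem[OF C g] order.refl)
    finally show "x \<in> ?X" using x by blast
  qed
  then have "fin_sums (\<Union> (S ` C)) \<subseteq> fin_sums ?X" by (rule fs_mono)
  then show "T C \<subseteq> ?X" unfolding induced_grading_def[of S C] setmul_closed_fs .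
qed

lemma T_symmetric: "symmetric_grading Q T"
  unfolding symmetric_grading_def using T_graded T_symm by blast

end

lemma join_l1: "(a::'a::ring) * b = b * a \<Longrightarrow> a * y = y \<Longrightarrow> idem_join a b * y = y"
  unfolding idem_join_def by (simp add: algebra_simps mult.assoc[symmetric])

lemma join_l2: "(b::'a::ring) * y = y \<Longrightarrow> idem_join a b * y = y"
  unfolding idem_join_def by (simp add: algebra_simps)

lemma join_r1: "(y::'a::ring) * a = y \<Longrightarrow> y * idem_join a b = y"
  unfolding idem_join_def by (simp add: algebra_simps mult.assoc[symmetric])

lemma join_r2: "(a::'a::ring) * b = b * a \<Longrightarrow> y * b = y \<Longrightarrow> y * idem_join a b = y"
proof -
  assume c: "a * b = b * a" and y: "y * b = y"
  have "y * (a * b) = y * a" using c y by (simp add: mult.assoc[symmetric])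
  then show ?thesis unfolding idem_join_def using y by (simp add: algebra_simps)
qed

lemma join_idem:
  assumes "(a::'a::ring) * a = a" "b * b = b" "a * b = b * a"
  shows "idem_join a b * idem_join a b = idem_join a b"
proof -
  have 1: "a * (a * b) = a * b" using assms(1) by (metis mult.assoc)
  have 3: "a * b * a = a * b"
  proof -
    have "a * b * a = a * (b * a)" by (rule mult.assoc)
    also have "\<dots> = a * (a * b)" using assms(3) by (rule arg_cong[where f="\<lambda>t. a * t", OF sym])
    also have "\<dots> = a * b" using 1 .
    finally show ?thesis .
  qed
  have 2: "b * (a * b) = a * b"
  proof -
    have "b * (a * b) = b * (b * a)" using assms(3) by (rule arg_cong[where f="\<lambda>t. b * t"])
    also have "\<dots> = b * a" using assms(2) by (metis mult.assoc)
    finally show ?thesis using assms(3) by simp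
  qed
  have 4: "a * b * b = a * b" using assms(2) by (metis mult.assoc)
  have 5: "a * b * (a * b) = a * b"
  proof -
    have "a * b * (a * b) = (a * b * a) * b" by (simp only: mult.assoc)
    also have "\<dots> = a * b" using 3 4 by simp
    finally show ?thesis .
  qed
  have "idem_join a b * idem_join a b = a*a + a*b - a*(a*b) + b*a + b*b - b*(a*b) - (a*b*a + a*b*b - a*b*(a*b))"
    unfolding idem_join_def by (simp add: algebra_simps)
  also have "\<dots> = idem_join a b" unfolding idem_join_def using assms 1 2 3 4 5 by (simp add: algebra_simps)
  finally show ?thesis .
qed

lemma idem_le_trans: "idem_le (a::'a::ring) b \<Longrightarrow> idem_le b c \<Longrightarrow> idem_le a c"
  unfolding idem_le_def by (metis mult.assoc)

lemma idem_le_antisym: "idem_le (a::'a::ring) b \<Longrightarrow> idem_le b a \<Longrightarrow> a = b"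
  unfolding idem_le_def by metis

context esn
begin

abbreviation R where "R C \<equiv> setmul (T C) (T (inv\<^bsub>Q\<^esub> C))"
abbreviation E where "E C \<equiv> joins (eps G S ` C)"

definition Z where "Z = {z \<in> S \<one>. z * z = z \<and> (\<forall>x\<in>S \<one>. z * x = x * z)}"

lemma Z_comm: "a \<in> Z \<Longrightarrow> b \<in> Z \<Longrightarrow> a * b = b * a"
  unfolding Z_def by blast

lemma Z_join: "a \<in> Z \<Longrightarrow> b \<in> Z \<Longrightarrow> idem_join a b \<in> Z"
proof -
  assume a: "a \<in> Z" and b: "b \<in> Z"
  have ab: "a * b = b * a" using Z_comm a b by blast
  have aS: "a \<in> S \<one>" and bS: "b \<in> S \<one>" using a b unfolding Z_def by blast+
  have one: "\<one> \<in> carrier G" by simp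
  have abS: "a * b \<in> S \<one>" using S_mult[OF one one aS bS] by simp
  have jS: "idem_join a b \<in> S \<one>" unfolding idem_join_def
    by (intro S_diff S_add aS bS abS one)
  have c: "idem_join a b * x = x * idem_join a b" if x: "x \<in> S \<one>" for x
  proof -
    have ax: "a * x = x * a" and bx: "b * x = x * b" using a b x unfolding Z_def by blast+
    have abx: "a * b * x = x * (a * b)"
    proof -
      have "a * b * x = a * (b * x)" by (rule mult.assoc)
      also have "\<dots> = (a * x) * b" by (simp only: bx mult.assoc)
      also have "\<dots> = x * (a * b)" by (simp only: ax mult.assoc)
      finally show ?thesis .
    qed
    show ?thesis unfolding idem_join_def
      by (simp only: left_diff_distrib right_diff_distrib distrib_left distrib_right ax bx abx)
  qed
  have ia: "a * a = a" and ib: "b * b = b" using a b unfolding Z_def by blast+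
  have "idem_join a b * idem_join a b = idem_join a b" using join_idem[OF ia ib ab] .
  then show ?thesis unfolding Z_def using jS c by blast
qed

lemma eps_Z: "g \<in> carrier G \<Longrightarrow> eps G S g \<in> Z"
  unfolding Z_def using eps_Se eps_idem eps_central by blast

lemma E_Z: "C \<in> carrier Q \<Longrightarrow> E C \<subseteq> Z"
proof
  fix x assume C: "C \<in> carrier Q" and x: "x \<in> E C"
  from x show "x \<in> Z"
    by (induction rule: joins.induct) (use eps_Z cos_sub[OF C] Z_join in auto)
qed

lemma R_uminus: "C \<in> carrier Q \<Longrightarrow> y \<in> R C \<Longrightarrow> - y \<in> R C"
proof -
  assume C: "C \<in> carrier Q" and y: "y \<in> R C"
  from y show ?thesis
  proof (induction rule: setmul_induct)
    case (prod a b)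
    then have "- (a * b) = (- a) * b" by simp
    then show ?case using T_uminus[OF C prod(1)] prod(2) setmul_prod by metis
  next
    case (add a b)
    have "- (a + b) = (- a) + (- b)" by simp
    then show ?case using add setmul_add by metis
  qed simp
qed

lemma R_mult: "C \<in> carrier Q \<Longrightarrow> x \<in> R C \<Longrightarrow> y \<in> R C \<Longrightarrow> x * y \<in> R C"
proof -
  assume C: "C \<in> carrier Q" and x: "x \<in> R C" and y: "y \<in> R C"
  interpret Q: group Q by (rule Qgrp)
  have Ci: "inv\<^bsub>Q\<^esub> C \<in> carrier Q" using C by simp
  have "setmul (R C) (R C) = setmul (T C) (setmul (setmul (T (inv\<^bsub>Q\<^esub> C)) (T C)) (T (inv\<^bsub>Q\<^esub> C)))"
    by (simp add: setmul_assoc)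
  also have "\<dots> \<subseteq> setmul (T C) (T ((inv\<^bsub>Q\<^esub> C \<otimes>\<^bsub>Q\<^esub> C) \<otimes>\<^bsub>Q\<^esub> inv\<^bsub>Q\<^esub> C))"
  proof (rule setmul_mono[OF order.refl])
    have "setmul (setmul (T (inv\<^bsub>Q\<^esub> C)) (T C)) (T (inv\<^bsub>Q\<^esub> C)) \<subseteq> setmul (T (inv\<^bsub>Q\<^esub> C \<otimes>\<^bsub>Q\<^esub> C)) (T (inv\<^bsub>Q\<^esub> C))"
      by (rule setmul_mono[OF T_setmul[OF Ci C] order.refl])
    also have "\<dots> \<subseteq> T ((inv\<^bsub>Q\<^esub> C \<otimes>\<^bsub>Q\<^esub> C) \<otimes>\<^bsub>Q\<^esub> inv\<^bsub>Q\<^esub> C)"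
      by (rule T_setmul[OF Q.m_closed[OF Ci C] Ci])
    finally show "setmul (setmul (T (inv\<^bsub>Q\<^esub> C)) (T C)) (T (inv\<^bsub>Q\<^esub> C)) \<subseteq> T ((inv\<^bsub>Q\<^esub> C \<otimes>\<^bsub>Q\<^esub> C) \<otimes>\<^bsub>Q\<^esub> inv\<^bsub>Q\<^esub> C)" .
  qed
  also have "(inv\<^bsub>Q\<^esub> C \<otimes>\<^bsub>Q\<^esub> C) \<otimes>\<^bsub>Q\<^esub> inv\<^bsub>Q\<^esub> C = inv\<^bsub>Q\<^esub> C"
    by (simp only: Q.l_inv[OF C] Q.l_one[OF Ci])
  finally show ?thesis using setmul_prod[OF x y] by blast
qed

lemma eps_R: "C \<in> carrier Q \<Longrightarrow> g \<in> C \<Longrightarrow> eps G S g \<in> R C"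
  using eps_mem[of g] cos_sub setmul_mono[OF S_T S_T[OF inv_mem]] by blast

lemma E_R: "C \<in> carrier Q \<Longrightarrow> E C \<subseteq> R C"
proof
  fix x assume C: "C \<in> carrier Q" and x: "x \<in> E C"
  from x show "x \<in> R C"
  proof (induction rule: joins.induct)
    case (base x) then show ?case using eps_R[OF C] by blast
  next
    case (join x y)
    have "idem_join x y = x + y + - (x * y)" unfolding idem_join_def by simp
    then show ?case using join R_mult[OF C] R_uminus[OF C] setmul_add by metis
  qed
qed

lemma E_ne: "C \<in> carrier Q \<Longrightarrow> \<exists>f. f \<in> E C"
  using cos_ne joins.base by blast

lemma E_act:
  assumes C: "C \<in> carrier Q" and r: "r \<in> R C"
  shows "\<exists>f\<in>E C. f * r = r \<and> r * f = r"
proof -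
  let ?P = "\<lambda>y. \<exists>f\<in>E C. f * y = y \<and> y * f = y"
  have comm: "\<And>a b. a \<in> E C \<Longrightarrow> b \<in> E C \<Longrightarrow> a * b = b * a" using E_Z[OF C] Z_comm by blast
  have P0: "?P 0" using E_ne[OF C] by (metis mult_zero_left mult_zero_right)
  have Padd: "?P (a + b)" if Pa: "?P a" and Pb: "?P b" for a b
  proof -
    obtain f1 where f1: "f1 \<in> E C" "f1 * a = a" "a * f1 = a" using Pa by blast
    obtain f2 where f2: "f2 \<in> E C" "f2 * b = b" "b * f2 = b" using Pb by blast
    note f = f1 f2
    have c: "f1 * f2 = f2 * f1" by (rule comm[OF f1(1) f2(1)])
    have "idem_join f1 f2 \<in> E C" by (rule joins.join[OF f1(1) f2(1)])
    moreover have "idem_join f1 f2 * (a + b) = a + b"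
      by (simp only: distrib_left join_l1[OF c f1(2)] join_l2[of f2 b f1, OF f2(2)])
    moreover have "(a + b) * idem_join f1 f2 = a + b"
      by (simp only: distrib_right join_r1[of a f1 f2, OF f1(3)] join_r2[OF c f2(3)])
    ultimately show ?thesis by blast
  qed
  have Pgen: "?P (x * y)" if x: "x \<in> S g" "g \<in> C" and y: "y \<in> S h" "h \<in> inv\<^bsub>Q\<^esub> C" for x y g h
  proof -
    have g: "g \<in> carrier G" using x cos_sub[OF C] by blast
    have hi: "inv h \<in> C" using inv_mem2[OF C y(2)] .
    have h: "h \<in> carrier G" using cos_sub[OF group.inv_closed[OF Qgrp C]] y(2) by blast
    let ?f = "idem_join (eps G S g) (eps G S (inv h))"
    have e1: "eps G S g \<in> E C" by (rule joins.base, rule imageI, rule x(2))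
    have e2: "eps G S (inv h) \<in> E C" by (rule joins.base, rule imageI, rule hi)
    have f: "?f \<in> E C" by (rule joins.join[OF e1 e2])
    have c: "eps G S g * eps G S (inv h) = eps G S (inv h) * eps G S g"
      by (rule comm[OF e1 e2])
    have "?f * x = x" using join_l1[OF c eps_left[OF g x(1)]] .
    then have 1: "?f * (x * y) = x * y" by (simp only: mult.assoc[symmetric])
    have "y * ?f = y" using join_r2[OF c eps_right[OF h y(1)]] .
    then have 2: "(x * y) * ?f = x * y" by (simp only: mult.assoc)
    show ?thesis using f 1 2 by blast
  qed
  have Pprod: "?P (a * b)" if a: "a \<in> T C" and b: "b \<in> T (inv\<^bsub>Q\<^esub> C)" for a b
    using a unfolding induced_grading_def
  proof (induction rule: fs_induct)
    case zero then show ?case using P0 by simp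
  next
    case (base x)
    then obtain g where xg: "x \<in> S g" "g \<in> C" by blast
    from b show ?case unfolding induced_grading_def
    proof (induction rule: fs_induct)
      case zero then show ?case using P0 by simp
    next
      case (base y) then obtain h where "y \<in> S h" "h \<in> inv\<^bsub>Q\<^esub> C" by blast
      then show ?case using Pgen xg by blast
    next
      case (add b1 b2) then show ?case using Padd[of "x * b1" "x * b2"] by (simp only: distrib_left)
    qed
  next
    case (add a1 a2) then show ?case using Padd[of "a1 * b" "a2 * b"] by (simp only: distrib_right)
  qed
  from r show ?thesis
  proof (induction rule: setmul_induct)
    case zero show ?case by (rule P0)
  next
    case (prod a b) then show ?case by (rule Pprod)
  next
    case (add a b) show ?case by (rule Padd[OF add(3) add(4)])
  qed
qed

lemma part_a: "C \<in> carrier Q \<Longrightarrow> local_units (R C) (E C)"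
proof -
  assume C: "C \<in> carrier Q"
  have 1: "E C \<subseteq> idempotents (R C)"
  proof
    fix x assume x: "x \<in> E C"
    have "x \<in> R C" using E_R[OF C] x by (rule subsetD)
    moreover have "x * x = x" using E_Z[OF C] x unfolding Z_def by blast
    ultimately show "x \<in> idempotents (R C)" unfolding idempotents_def by blast
  qed
  have 2: "\<forall>a\<in>E C. \<forall>b\<in>E C. a * b = b * a"
    using E_Z[OF C] Z_comm by blast
  have 3: "\<forall>a\<in>E C. \<forall>b\<in>E C. idem_join a b \<in> E C"
    using joins.join by blast
  have 4: "\<forall>r\<in>R C. \<exists>f\<in>E C. f * r = r \<and> r * f = r"
    using E_act[OF C] by blast
  show ?thesis unfolding local_units_def using 1 2 3 4 by blast
qed

end

lemma exists_max:
  fixes X :: "'a::ring set"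
  assumes nic: "no_infinite_chain X" and e: "e \<in> X" and idem: "\<And>x. x \<in> X \<Longrightarrow> x * x = x"
  shows "\<exists>m\<in>maximal_elements X. idem_le e m"
proof (rule ccontr)
  assume nm: "\<not> (\<exists>m\<in>maximal_elements X. idem_le e m)"
  let ?U = "{x \<in> X. idem_le e x}"
  have refl: "idem_le x x" if "x \<in> X" for x using idem[OF that] unfolding idem_le_def by simp
  have step: "\<exists>y. y \<in> ?U \<and> idem_le x y \<and> y \<noteq> x" if x: "x \<in> ?U" for x
  proof -
    have "x \<notin> maximal_elements X" using nm x by blast
    then obtain y where y: "y \<in> X" "idem_le x y" "y \<noteq> x" using x unfolding maximal_elements_def by blast
    then have "idem_le e y" using x idem_le_trans by blast
    then show ?thesis using y by blast
  qed
  define nxt where "nxt x = (SOME y. y \<in> ?U \<and> idem_le x y \<and> y \<noteq> x)" for x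
  have nxt: "nxt x \<in> ?U \<and> idem_le x (nxt x) \<and> nxt x \<noteq> x" if "x \<in> ?U" for x
    unfolding nxt_def using someI_ex[OF step[OF that]] .
  define f where "f n = (nxt ^^ n) e" for n
  have f0: "f 0 = e" and fS: "f (Suc n) = nxt (f n)" for n unfolding f_def by simp_all
  have fU: "f n \<in> ?U" for n
  proof (induction n)
    case 0 then show ?case using e refl f0 by simp
  next
    case (Suc n) then show ?case using nxt fS by simp
  qed
  have fX: "f n \<in> X" for n using fU by blast
  have fle: "idem_le (f i) (f (i + k))" for i k
  proof (induction k)
    case 0 then show ?case using refl fX by simp
  next
    case (Suc k)
    have "idem_le (f (i + k)) (f (Suc (i + k)))" using nxt[OF fU] fS by simp
    then show ?case using Suc idem_le_trans by simp
  qed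
  have fle2: "idem_le (f i) (f j)" if "i \<le> j" for i j
    using fle[of i "j - i"] that by simp
  have fne: "f (Suc n) \<noteq> f n" for n using nxt[OF fU] fS by simp
  have inj: "inj f"
  proof (rule injI, rule ccontr)
    fix i j assume eq: "f i = f j" and ne: "i \<noteq> j"
    have "\<exists>a b. a < b \<and> f a = f b" using eq ne by (metis linorder_neqE_nat)
    then obtain a b where ab: "a < b" "f a = f b" by blast
    have 1: "idem_le (f a) (f (Suc a))" using fle2[of a "Suc a"] by simp
    have 2: "idem_le (f (Suc a)) (f a)" using fle2[of "Suc a" b] ab by simp
    show False using idem_le_antisym[OF 1 2] fne[of a] by simp
  qed
  have "infinite (range f)" using finite_imageD[of f UNIV] inj by auto
  moreover have "range f \<subseteq> X" using fX by blast
  moreover have "\<forall>a\<in>range f. \<forall>b\<in>range f. idem_le a b \<or> idem_le b a"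
    using fle2 nat_le_linear by blast
  ultimately show False using nic unfolding no_infinite_chain_def by blast
qed

context esn
begin

lemma part_b:
  assumes C: "C \<in> carrier Q" and nic: "no_infinite_chain (E C)"
    and po: "pairwise_orthogonal (maximal_elements (E C))"
  shows "enough_idempotents (R C)"
proof -
  let ?M = "maximal_elements (E C)"
  have lu: "local_units (R C) (E C)" using part_a[OF C] .
  have EI: "E C \<subseteq> idempotents (R C)" and Ec: "\<forall>a\<in>E C. \<forall>b\<in>E C. a * b = b * a"
    and Ej: "\<forall>a\<in>E C. \<forall>b\<in>E C. idem_join a b \<in> E C"
    and Ea: "\<forall>r\<in>R C. \<exists>f\<in>E C. f * r = r \<and> r * f = r"
    using lu unfolding local_units_def by blast+
  have ME: "?M \<subseteq> E C" unfolding maximal_elements_def by blast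
  have idem: "\<And>x. x \<in> E C \<Longrightarrow> x * x = x" using EI unfolding idempotents_def by blast
  have JM: "joins ?M \<subseteq> E C"
  proof
    fix x assume "x \<in> joins ?M"
    then show "x \<in> E C"
    proof (induction rule: joins.induct)
      case (base x) then show ?case using ME by blast
    next
      case (join x y) then show ?case using Ej by blast
    qed
  qed
  have 1: "?M \<subseteq> idempotents (R C)" using ME EI by blast
  have 2: "\<forall>a\<in>?M. \<forall>b\<in>?M. a * b = b * a" using ME Ec by blast
  have 3: "\<forall>a\<in>?M. \<forall>b\<in>?M. a \<noteq> b \<longrightarrow> a * b = 0" using po unfolding pairwise_orthogonal_def by blast
  have act: "\<exists>m\<in>joins ?M. m * r = r \<and> r * m = r" if r: "r \<in> R C" for r
  proof -
    obtain f where f: "f \<in> E C" "f * r = r" "r * f = r" using Ea r by blast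
    obtain m where m: "m \<in> ?M" "idem_le f m" using exists_max[OF nic f(1) idem] by blast
    have fm: "f = f * m" "f = m * f" using m(2) unfolding idem_le_def by blast+
    have "m * r = r"
    proof -
      have "m * r = m * (f * r)" using f(2) by simp
      also have "\<dots> = (m * f) * r" by (simp only: mult.assoc)
      also have "\<dots> = r" using fm(2) f(2) by simp
      finally show ?thesis .
    qed
    moreover have "r * m = r"
    proof -
      have "r * m = (r * f) * m" using f(3) by simp
      also have "\<dots> = r * (f * m)" by (simp only: mult.assoc)
      also have "\<dots> = r" using fm(1) f(3) by simp
      finally show ?thesis .
    qed
    moreover have "m \<in> joins ?M" using m(1) by (rule joins.base)
    ultimately show ?thesis by blast
  qed
  have "local_units (R C) (joins ?M)"
    unfolding local_units_def
  proof (intro conjI)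
    show "joins ?M \<subseteq> idempotents (R C)" using JM EI by blast
    show "\<forall>a\<in>joins ?M. \<forall>b\<in>joins ?M. a * b = b * a" using JM Ec by blast
    show "\<forall>a\<in>joins ?M. \<forall>b\<in>joins ?M. idem_join a b \<in> joins ?M" using joins.join by blast
    show "\<forall>r\<in>R C. \<exists>f\<in>joins ?M. f * r = r \<and> r * f = r" using act by blast
  qed
  then show ?thesis unfolding enough_idempotents_def using 1 2 3 by blast
qed

end

theorem theorem5p15:
  fixes G :: "('g, 'm) monoid_scheme" and N :: "'g set" and S :: "'g \<Rightarrow> 'a::ring set"
  assumes "group G" and "N \<lhd> G" and "epsilon_strong G S"
  shows "(\<forall>C\<in>carrier (G Mod N).
            local_units (setmul (induced_grading S C) (induced_grading S (inv\<^bsub>G Mod N\<^esub> C)))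
                        (joins (eps G S ` C)))
         \<and> essentially_epsilon_strong (G Mod N) (induced_grading S)
         \<and> ((\<forall>C\<in>carrier (G Mod N).
            no_infinite_chain (joins (eps G S ` C)) \<and>
            pairwise_orthogonal (maximal_elements (joins (eps G S ` C))))
         \<longrightarrow> virtually_epsilon_strong (G Mod N) (induced_grading S))"
proof -
  interpret X: esn G S N
    by (intro esn.intro es.intro es_axioms.intro esn_axioms.intro assms)
  have a: "\<forall>C\<in>carrier (G Mod N).
            local_units (setmul (induced_grading S C) (induced_grading S (inv\<^bsub>G Mod N\<^esub> C)))
                        (joins (eps G S ` C))"
    using X.part_a by blast
  have b: "essentially_epsilon_strong (G Mod N) (induced_grading S)"
    unfolding essentially_epsilon_strong_def has_local_units_def using X.T_symmetric a by blast
  have c: "virtually_epsilon_strong (G Mod N) (induced_grading S)"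
    if h: "\<forall>C\<in>carrier (G Mod N).
            no_infinite_chain (joins (eps G S ` C)) \<and>
            pairwise_orthogonal (maximal_elements (joins (eps G S ` C)))"
    unfolding virtually_epsilon_strong_def using X.T_symmetric X.part_b h by blast
  show ?thesis using a b c by blast
qed


end
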